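(* Let $A\in\mathbb{R}^{m\times n}$ with $m\ge n$ and with nonzero rows $a_1^\top,\dots,a_m^\top$, let $x\in\mathbb{R}^n$ and set $b:=Ax\in\mathbb{R}^m$ (so $x$ solves the consistent system $Ax=b$). Fix $\beta\in[0,1)$, $M\in[0,1]$ and $l\in\{1,\dots,n\}$. Let $\sigma_l$ be the $l$-th largest singular value of $A$ and $v_l$ an associated right singular vector. Given $x_0\in\mathbb{R}^n$ and $y_0=0\in\mathbb{R}^n$, define for $k=0,1,2,\dots$ $$x_{k+1}=x_k+\frac{b_{i_k}-\langle x_k,a_{i_k}\rangle}{\|a_{i_k}\|_2^2}a_{i_k}+My_k,\qquad y_{k+1}=\beta y_k+(1-\beta)(x_{k+1}-x_k),$$ where the indices $i_0,i_1,\dots$ are chosen independently, each equal to $i\in\{1,\dots,m\}$ with probability $\|a_i\|_2^2/\|A\|_F^2$. Set $$r:=1-\frac{\sigma_l^2}{\|A\|_F^2}+M(1-\beta),\qquad \zeta:=M(1-\beta)^2.$$ Then for all $k\ge 0$, $$\mathbb{E}\langle x_{k+1}-x,v_l\rangle=\begin{bmatrix} r\\ \zeta\end{bmatrix}^\top\begin{bmatrix} r&\zeta\\ -1&\beta\end{bmatrix}^k\begin{bmatrix}1\\ \frac{-1}{1-\beta}\end{bmatrix}\langle x_0-x,v_l\rangle .$$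
   Context: $\|\cdot\|_2$ is the Euclidean norm, $\langle\cdot,\cdot\rangle$ the standard inner product, $\|A\|_F$ the Frobenius norm, $b_i$ the $i$-th entry of $b$. The expectation is over the random indices $i_0,\dots,i_k$. The iteration above is called randomized Kaczmarz with geometrically smoothed momentum (KGSM). *)

theory Defs
  imports "HOL-Analysis.Analysis" "HOL-Probability.Probability"
begin

definition frob_norm :: "real^'n^'m \<Rightarrow> real" where
  "frob_norm A = sqrt (\<Sum>i\<in>UNIV. \<Sum>j\<in>UNIV. (A $ i $ j)^2)"

text \<open>Thin singular value decomposition with singular values indexed 1..n in
  non-increasing order: A = sum_j s_j u_j v_j^T, with orthonormal right singular
  vectors V 1..V n (a basis of R^n) and orthonormal left singular vectors U 1..U n.\<close>
definition is_svd :: "real^'n^'m \<Rightarrow> (nat \<Rightarrow> real) \<Rightarrow> (nat \<Rightarrow> real^'m) \<Rightarrow> (nat \<Rightarrow> real^'n) \<Rightarrow> bool" where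
  "is_svd A s U V \<longleftrightarrow>
     (\<forall>j\<in>{1..CARD('n)}. s j \<ge> 0) \<and>
     (\<forall>j\<in>{1..CARD('n)}. \<forall>j'\<in>{1..CARD('n)}. j \<le> j' \<longrightarrow> s j' \<le> s j) \<and>
     (\<forall>j\<in>{1..CARD('n)}. \<forall>j'\<in>{1..CARD('n)}. V j \<bullet> V j' = (if j = j' then 1 else 0)) \<and>
     (\<forall>j\<in>{1..CARD('n)}. \<forall>j'\<in>{1..CARD('n)}. U j \<bullet> U j' = (if j = j' then 1 else 0)) \<and>
     (\<forall>j\<in>{1..CARD('n)}. A *v V j = s j *\<^sub>R U j)"

definition singular_pair :: "real^'n^'m \<Rightarrow> nat \<Rightarrow> real \<Rightarrow> real^'n \<Rightarrow> bool" where
  "singular_pair A l \<sigma> v \<longleftrightarrow>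
     (\<exists>s U V. is_svd A s U V \<and> \<sigma> = s l \<and> v = V l)"

definition row_pmf :: "real^'n^'m \<Rightarrow> 'm pmf" where
  "row_pmf A = embed_pmf (\<lambda>i. (norm (A $ i))^2 / (frob_norm A)^2)"

text \<open>KGSM iterates (x_k, y_k), driven by the index sequence \<omega> (\<omega> k = i_k).\<close>
primrec kgsm :: "real^'n^'m \<Rightarrow> real^'m \<Rightarrow> real \<Rightarrow> real \<Rightarrow> real^'n \<Rightarrow> (nat \<Rightarrow> 'm) \<Rightarrow> nat \<Rightarrow> (real^'n) \<times> (real^'n)" where
  "kgsm A b M \<beta> x0 \<omega> 0 = (x0, 0)"
| "kgsm A b M \<beta> x0 \<omega> (Suc k) =
     (let xk = fst (kgsm A b M \<beta> x0 \<omega> k); yk = snd (kgsm A b M \<beta> x0 \<omega> k); i = \<omega> k;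
          x' = xk + ((b $ i - xk \<bullet> (A $ i)) / (norm (A $ i))^2) *\<^sub>R (A $ i) + M *\<^sub>R yk;
          y' = \<beta> *\<^sub>R yk + (1 - \<beta>) *\<^sub>R (x' - xk)
      in (x', y'))"

definition vec2 :: "real \<Rightarrow> real \<Rightarrow> real^2" where
  "vec2 a c = (\<chi> i. if i = 1 then a else c)"

definition mat22 :: "real \<Rightarrow> real \<Rightarrow> real \<Rightarrow> real \<Rightarrow> real^2^2" where
  "mat22 a c d e = (\<chi> i. if i = 1 then vec2 a c else vec2 d e)"

definition matpow2 :: "real^2^2 \<Rightarrow> nat \<Rightarrow> real^2^2" where
  "matpow2 T k = (((**) T) ^^ k) (mat 1)"

end

theory Submission
  imports Defs
begin

lemma svd_key:
  fixes A :: "real^'n^'m"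
  assumes "l \<in> {1..CARD('n)}" "singular_pair A l \<sigma> v"
  shows "(A *v w) \<bullet> (A *v v) = \<sigma>^2 * (w \<bullet> v)"
proof -
  obtain s U V where svd: "is_svd A s U V" and sv: "\<sigma> = s l" "v = V l"
    using assms(2) unfolding singular_pair_def by blast
  let ?I = "{1..CARD('n)}"
  have orth: "\<And>j j'. j \<in> ?I \<Longrightarrow> j' \<in> ?I \<Longrightarrow> V j \<bullet> V j' = (if j = j' then 1 else 0)"
    and orthU: "\<And>j j'. j \<in> ?I \<Longrightarrow> j' \<in> ?I \<Longrightarrow> U j \<bullet> U j' = (if j = j' then 1 else 0)"
    and AV: "\<And>j. j \<in> ?I \<Longrightarrow> A *v V j = s j *\<^sub>R U j"
    using svd unfolding is_svd_def by blast+
  have inj: "inj_on V ?I"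
  proof (rule inj_onI)
    fix j j' assume "j \<in> ?I" "j' \<in> ?I" "V j = V j'"
    then have "V j \<bullet> V j' = 1" using orth[of j j] by simp
    then show "j = j'" using orth[of j j'] \<open>j \<in> ?I\<close> \<open>j' \<in> ?I\<close> by (auto split: if_splits)
  qed
  let ?B = "V ` ?I"
  have card: "card ?B = CARD('n)" using card_image[OF inj] by simp
  have ind: "independent ?B"
  proof (rule pairwise_orthogonal_independent)
    show "pairwise orthogonal ?B"
      unfolding pairwise_def orthogonal_def using orth by fastforce
    show "0 \<notin> ?B" using orth by fastforce
  qed
  have sp: "span ?B = UNIV"
    using card_eq_dim[of ?B UNIV] ind card by (auto simp: dim_UNIV)
  have w: "w \<in> span ?B" using sp by simp
  have P: "(A *v w) \<bullet> (A *v v) = \<sigma>^2 * (w \<bullet> v)"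
    using w
  proof (induction rule: span_induct)
    case base
    show ?case unfolding subspace_def
      by (auto simp: matrix_vector_right_distrib inner_add_left algebra_simps matrix_vector_mult_scaleR)
  next
    case (step z)
    then obtain j where j: "j \<in> ?I" "z = V j" by blast
    show ?case using j assms(1) AV orth orthU sv
      by (auto simp: power2_eq_square)
  qed
  then show ?thesis .
qed


lemma kgsm_local:
  "(\<forall>i<j. \<omega> i = \<omega>' i) \<Longrightarrow> kgsm A b M \<beta> x0 \<omega> j = kgsm A b M \<beta> x0 \<omega>' j"
  by (induction j) (auto simp: Let_def)

lemma Pi_Suc:
  "Pi_pmf {..<Suc j} d p = map_pmf (\<lambda>(y,f). f(j:=y)) (pair_pmf (p j) (Pi_pmf {..<j} d p))"
  using Pi_pmf_insert[of "{..<j}" j d p] by (simp add: lessThan_Suc)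

lemma finite_Pi_set:
  assumes "\<And>i. finite (set_pmf (p i))"
  shows "finite (set_pmf (Pi_pmf {..<(j::nat)} d p))"
  by (induction j) (auto simp: Pi_Suc assms)

lemma exp_pair:
  fixes f :: "'a \<times> 'b \<Rightarrow> real"
  assumes "finite (set_pmf p)" "finite (set_pmf q)"
  shows "measure_pmf.expectation (pair_pmf p q) f
       = measure_pmf.expectation q (\<lambda>b. measure_pmf.expectation p (\<lambda>a. f (a,b)))"
proof -
  have "measure_pmf.expectation (pair_pmf p q) f
      = (\<Sum>z\<in>set_pmf p \<times> set_pmf q. pmf (pair_pmf p q) z *\<^sub>R f z)"
    by (rule integral_measure_pmf) (use assms in auto)
  also have "\<dots> = (\<Sum>a\<in>set_pmf p. \<Sum>b\<in>set_pmf q. pmf p a * pmf q b * f (a,b))"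
    by (simp add: sum.cartesian_product case_prod_unfold, intro sum.cong) (auto simp: pmf_pair split: prod.splits)
  also have "\<dots> = (\<Sum>b\<in>set_pmf q. pmf q b * (\<Sum>a\<in>set_pmf p. pmf p a * f (a,b)))"
    by (subst sum.swap) (simp add: sum_distrib_left algebra_simps)
  also have "\<dots> = measure_pmf.expectation q (\<lambda>b. measure_pmf.expectation p (\<lambda>a. f (a,b)))"
  proof -
    have i: "\<And>b. measure_pmf.expectation p (\<lambda>a. f (a,b)) = (\<Sum>a\<in>set_pmf p. pmf p a *\<^sub>R f (a,b))"
      by (rule integral_measure_pmf) (use assms in auto)
    have "measure_pmf.expectation q (\<lambda>b. measure_pmf.expectation p (\<lambda>a. f (a,b)))
       = (\<Sum>b\<in>set_pmf q. pmf q b *\<^sub>R measure_pmf.expectation p (\<lambda>a. f (a,b)))"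
      by (rule integral_measure_pmf) (use assms in auto)
    then show ?thesis by (simp add: i)
  qed
  finally show ?thesis .
qed

lemma exp_step:
  fixes H :: "(real^'n) \<times> (real^'n) \<Rightarrow> 'm::finite \<Rightarrow> real"
  assumes "finite (set_pmf p)"
  shows "measure_pmf.expectation (Pi_pmf {..<Suc j} d (\<lambda>_. p))
            (\<lambda>\<omega>. H (kgsm A b M \<beta> x0 \<omega> j) (\<omega> j))
       = measure_pmf.expectation (Pi_pmf {..<j} d (\<lambda>_. p))
            (\<lambda>f. measure_pmf.expectation p (\<lambda>y. H (kgsm A b M \<beta> x0 f j) y))"
proof -
  have loc: "\<And>f y. kgsm A b M \<beta> x0 (f(j:=y)) j = kgsm A b M \<beta> x0 f j"
    by (rule kgsm_local) auto
  show ?thesis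
    unfolding Pi_Suc
    by (simp only: integral_map_pmf)
    (subst exp_pair, auto simp: assms finite_Pi_set loc case_prod_unfold)
qed


lemma frob_sq: "(frob_norm A)^2 = (\<Sum>i\<in>UNIV. (norm (A $ i))^2)"
proof -
  have "(frob_norm A)^2 = (\<Sum>i\<in>UNIV. \<Sum>j\<in>UNIV. (A $ i $ j)^2)"
    unfolding frob_norm_def by (rule real_sqrt_pow2) (auto intro!: sum_nonneg)
  also have "\<dots> = (\<Sum>i\<in>UNIV. (norm (A $ i))^2)"
    by (simp only: power2_norm_eq_inner) (simp add: inner_vec_def power2_eq_square)
  finally show ?thesis .
qed

lemma frob_pos:
  fixes A :: "real^'n^'m"
  assumes "\<forall>i. A $ i \<noteq> 0"
  shows "(frob_norm A)^2 > 0"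
  unfolding frob_sq using assms by (intro sum_pos) auto

lemma pmf_row:
  fixes A :: "real^'n^'m"
  assumes "\<forall>i. A $ i \<noteq> 0"
  shows "pmf (row_pmf A) i = (norm (A $ i))^2 / (frob_norm A)^2"
  unfolding row_pmf_def
proof (rule pmf_embed_pmf)
  show "\<And>x. 0 \<le> (norm (A $ x))^2 / (frob_norm A)^2" by simp
  have "(\<integral>\<^sup>+ x. ennreal ((norm (A $ x))^2 / (frob_norm A)^2) \<partial>count_space UNIV)
      = (\<Sum>x\<in>UNIV. ennreal ((norm (A $ x))^2 / (frob_norm A)^2))"
    by (rule nn_integral_count_space_finite) simp
  also have "\<dots> = ennreal (\<Sum>x\<in>UNIV. (norm (A $ x))^2 / (frob_norm A)^2)"
    by (rule sum_ennreal) simp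
  also have "(\<Sum>x\<in>UNIV. (norm (A $ x))^2 / (frob_norm A)^2) = 1"
    using frob_pos[OF assms] by (simp add: sum_divide_distrib[symmetric] frob_sq[symmetric])
  finally show "(\<integral>\<^sup>+ x. ennreal ((norm (A $ x))^2 / (frob_norm A)^2) \<partial>count_space UNIV) = 1"
    by simp
qed

lemma mv_row: "(A *v w) $ i = A $ i \<bullet> w"
  by (simp add: matrix_vector_mult_def inner_vec_def mult.commute)

lemma row_exp:
  fixes A :: "real^'n^'m"
  assumes rows: "\<forall>i. A $ i \<noteq> 0"
    and l: "l \<in> {1..CARD('n)}" and sp: "singular_pair A l \<sigma> v"
  shows "measure_pmf.expectation (row_pmf A)
      (\<lambda>i. (xk + (((A *v x) $ i - xk \<bullet> A $ i) / (norm (A $ i))^2) *\<^sub>R A $ i + M *\<^sub>R yk - x) \<bullet> v)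
    = (1 - \<sigma>^2 / (frob_norm A)^2) * ((xk - x) \<bullet> v) + M * (yk \<bullet> v)"
proof -
  define F where "F = (frob_norm A)^2"
  have F: "F > 0" using frob_pos[OF rows] by (simp add: F_def)
  define c where "c = (xk - x) \<bullet> v + M * (yk \<bullet> v)"
  have fi: "(xk + (((A *v x) $ i - xk \<bullet> A $ i) / (norm (A $ i))^2) *\<^sub>R A $ i + M *\<^sub>R yk - x) \<bullet> v
      = c + ((A *v (x - xk)) $ i) * ((A *v v) $ i) / (norm (A $ i))^2" for i
    by (simp add: c_def mv_row inner_add_left inner_diff_left inner_diff_right algebra_simps inner_commute)
  have "measure_pmf.expectation (row_pmf A)
      (\<lambda>i. (xk + (((A *v x) $ i - xk \<bullet> A $ i) / (norm (A $ i))^2) *\<^sub>R A $ i + M *\<^sub>R yk - x) \<bullet> v)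
    = (\<Sum>i\<in>UNIV. pmf (row_pmf A) i *\<^sub>R ((xk + (((A *v x) $ i - xk \<bullet> A $ i) / (norm (A $ i))^2) *\<^sub>R A $ i + M *\<^sub>R yk - x) \<bullet> v))"
    by (rule integral_measure_pmf) auto
  also have "\<dots> = (\<Sum>i\<in>UNIV. pmf (row_pmf A) i * c + ((A *v (x - xk)) $ i) * ((A *v v) $ i) / F)"
  proof (rule sum.cong)
    fix i
    have "A $ i \<noteq> 0" using rows by blast
    then have "norm (A $ i) \<noteq> 0" by simp
    then show "pmf (row_pmf A) i *\<^sub>R ((xk + (((A *v x) $ i - xk \<bullet> A $ i) / (norm (A $ i))^2) *\<^sub>R A $ i + M *\<^sub>R yk - x) \<bullet> v)
       = pmf (row_pmf A) i * c + ((A *v (x - xk)) $ i) * ((A *v v) $ i) / F"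
      unfolding fi pmf_row[OF rows] F_def[symmetric] using F
      by (simp add: field_simps)
  qed simp
  also have "\<dots> = c * (\<Sum>i\<in>UNIV. pmf (row_pmf A) i) + ((A *v (x - xk)) \<bullet> (A *v v)) / F"
    by (simp add: sum.distrib sum_distrib_left sum_divide_distrib[symmetric] inner_vec_def mult.commute)
  also have "(\<Sum>i\<in>UNIV. pmf (row_pmf A) i) = 1"
    by (rule sum_pmf_eq_1) auto
  also have "(A *v (x - xk)) \<bullet> (A *v v) = \<sigma>^2 * ((x - xk) \<bullet> v)"
    by (rule svd_key[OF l sp])
  finally show ?thesis
    unfolding c_def F_def[symmetric] using F
    by (simp add: field_simps inner_diff_left)
qed


lemma lin2:
  fixes f g :: "'a \<Rightarrow> real"
  assumes "finite (set_pmf P)"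
  shows "measure_pmf.expectation P (\<lambda>w. a * f w + b * g w)
       = a * measure_pmf.expectation P f + b * measure_pmf.expectation P g"
proof -
  have i: "integrable (measure_pmf P) h" for h :: "'a \<Rightarrow> real"
    by (rule integrable_measure_pmf_finite[OF assms])
  show ?thesis
    by (simp add: Bochner_Integration.integral_add[OF i i] i)
qed

lemma vec2_nth [simp]: "vec2 a b $ 1 = a" "vec2 a b $ 2 = b"
  by (simp_all add: vec2_def)

lemma vec2_inner: "vec2 a b \<bullet> w = a * w $ 1 + b * w $ 2"
  by (simp add: inner_vec_def sum_2)

lemma mat22_mv: "mat22 a b c d *v w = vec2 (a * w $ 1 + b * w $ 2) (c * w $ 1 + d * w $ 2)"
  by (simp add: vec_eq_iff forall_2 mat22_def matrix_vector_mult_def sum_2 vec2_def)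

lemma matpow2_Suc: "matpow2 T (Suc k) *v w = T *v (matpow2 T k *v w)"
  by (simp add: matpow2_def matrix_vector_mul_assoc)

lemma matpow2_0: "matpow2 T 0 *v w = w"
  by (simp add: matpow2_def)


theorem theorem1p1:
  fixes A :: "real^'n^'m" and x x0 v :: "real^'n" and \<beta> M \<sigma> :: real and l :: nat
  assumes "CARD('m) \<ge> CARD('n)"
    and "\<forall>i. A $ i \<noteq> 0"
    and "0 \<le> \<beta>" "\<beta> < 1" "0 \<le> M" "M \<le> 1"
    and "l \<in> {1..CARD('n)}"
    and "singular_pair A l \<sigma> v"
  shows "\<forall>k. measure_pmf.expectation (Pi_pmf {..k} undefined (\<lambda>_. row_pmf A))
            (\<lambda>\<omega>. (fst (kgsm A (A *v x) M \<beta> x0 \<omega> (Suc k)) - x) \<bullet> v)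
        = vec2 (1 - \<sigma>^2 / (frob_norm A)^2 + M * (1 - \<beta>)) (M * (1 - \<beta>)^2) \<bullet>
          (matpow2 (mat22 (1 - \<sigma>^2 / (frob_norm A)^2 + M * (1 - \<beta>)) (M * (1 - \<beta>)^2) (-1) \<beta>) k
            *v vec2 1 (-1 / (1 - \<beta>))) * ((x0 - x) \<bullet> v)"
proof -
  note rows = assms(2) and lA = assms(7) and spA = assms(8)
  define S where "S = (\<lambda>j \<omega>. kgsm A (A *v x) M \<beta> x0 \<omega> j)"
  define P where "P = (\<lambda>j::nat. Pi_pmf {..<j} undefined (\<lambda>_. row_pmf A))"
  define c where "c = 1 - \<sigma>^2 / (frob_norm A)^2"
  define r where "r = 1 - \<sigma>^2 / (frob_norm A)^2 + M * (1 - \<beta>)"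
  define \<zeta> where "\<zeta> = M * (1 - \<beta>)^2"
  define T where "T = mat22 r \<zeta> (-1) \<beta>"
  define u where "u = vec2 1 (-1 / (1 - \<beta>))"
  define E0 where "E0 = (x0 - x) \<bullet> v"
  define p where "p = (\<lambda>j. measure_pmf.expectation (P j) (\<lambda>\<omega>. (fst (S j \<omega>) - x) \<bullet> v))"
  define q where "q = (\<lambda>j. measure_pmf.expectation (P j) (\<lambda>\<omega>. snd (S j \<omega>) \<bullet> v))"
  have finrow: "finite (set_pmf (row_pmf A))" by (rule finite_subset[of _ UNIV]) auto
  have finP: "finite (set_pmf (P j))" for j
    unfolding P_def by (rule finite_Pi_set) (simp add: finrow)
  define H1 where "H1 = (\<lambda>(st :: (real^'n) \<times> (real^'n)) i.
     fst st + (((A *v x) $ i - fst st \<bullet> A $ i) / (norm (A $ i))^2) *\<^sub>R A $ i + M *\<^sub>R snd st)"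
  have Sfst: "fst (S (Suc j) \<omega>) = H1 (S j \<omega>) (\<omega> j)" for j \<omega>
    by (simp add: S_def H1_def Let_def)
  have Ssnd: "snd (S (Suc j) \<omega>) \<bullet> v = \<beta> * (snd (S j \<omega>) \<bullet> v) + (1 - \<beta>) * ((H1 (S j \<omega>) (\<omega> j) - x) \<bullet> v)
      - (1 - \<beta>) * ((fst (S j \<omega>) - x) \<bullet> v)" for j \<omega>
    by (simp add: S_def H1_def Let_def inner_add_left inner_diff_left algebra_simps add_divide_distrib diff_divide_distrib)
  have rowE: "measure_pmf.expectation (row_pmf A) (\<lambda>i. (H1 st i - x) \<bullet> v)
      = c * ((fst st - x) \<bullet> v) + M * (snd st \<bullet> v)" for st
    unfolding H1_def c_def using row_exp[OF rows lA spA, of "fst st" x M "snd st"]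
    by (simp add: case_prod_unfold)
  have p0: "p 0 = E0" by (simp add: p_def P_def S_def E0_def)
  have q0: "q 0 = 0" by (simp add: q_def P_def S_def)
  have pS: "p (Suc j) = c * p j + M * q j" for j
  proof -
    have "p (Suc j) = measure_pmf.expectation (P (Suc j)) (\<lambda>\<omega>. (\<lambda>st i. (H1 st i - x) \<bullet> v) (S j \<omega>) (\<omega> j))"
      unfolding p_def Sfst by simp
    also have "\<dots> = measure_pmf.expectation (P j) (\<lambda>f. measure_pmf.expectation (row_pmf A)
                  (\<lambda>y. (H1 (S j f) y - x) \<bullet> v))"
      unfolding P_def S_def by (rule exp_step[OF finrow])
    also have "\<dots> = measure_pmf.expectation (P j) (\<lambda>f. c * ((fst (S j f) - x) \<bullet> v) + M * (snd (S j f) \<bullet> v))"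
      by (simp add: rowE)
    also have "\<dots> = c * p j + M * q j"
      unfolding p_def q_def by (rule lin2[OF finP])
    finally show ?thesis .
  qed
  have qS: "q (Suc j) = \<beta> * q j + (1 - \<beta>) * p (Suc j) - (1 - \<beta>) * p j" for j
  proof -
    have "q (Suc j) = measure_pmf.expectation (P (Suc j)) (\<lambda>\<omega>. (\<lambda>st i. \<beta> * (snd st \<bullet> v) + (1 - \<beta>) * ((H1 st i - x) \<bullet> v)
      - (1 - \<beta>) * ((fst st - x) \<bullet> v)) (S j \<omega>) (\<omega> j))"
      unfolding q_def Ssnd by simp
    also have "\<dots> = measure_pmf.expectation (P j) (\<lambda>f. measure_pmf.expectation (row_pmf A)
                  (\<lambda>y. \<beta> * (snd (S j f) \<bullet> v) + (1 - \<beta>) * ((H1 (S j f) y - x) \<bullet> v)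
      - (1 - \<beta>) * ((fst (S j f) - x) \<bullet> v)))"
      unfolding P_def S_def by (rule exp_step[OF finrow])
    also have "\<dots> = measure_pmf.expectation (P j) (\<lambda>f. (\<beta> + (1 - \<beta>) * M) * (snd (S j f) \<bullet> v)
         + ((1 - \<beta>) * c - (1 - \<beta>)) * ((fst (S j f) - x) \<bullet> v))"
    proof (rule arg_cong[where f = "measure_pmf.expectation (P j)"], rule ext)
      fix f
      have "measure_pmf.expectation (row_pmf A)
                  (\<lambda>y. \<beta> * (snd (S j f) \<bullet> v) + (1 - \<beta>) * ((H1 (S j f) y - x) \<bullet> v)
      - (1 - \<beta>) * ((fst (S j f) - x) \<bullet> v))
        = measure_pmf.expectation (row_pmf A)
                  (\<lambda>y. (1 - \<beta>) * ((H1 (S j f) y - x) \<bullet> v) + 1 * (\<beta> * (snd (S j f) \<bullet> v)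
      - (1 - \<beta>) * ((fst (S j f) - x) \<bullet> v)))"
        by (simp add: algebra_simps)
      also have "\<dots> = (1 - \<beta>) * measure_pmf.expectation (row_pmf A) (\<lambda>y. (H1 (S j f) y - x) \<bullet> v)
          + 1 * measure_pmf.expectation (row_pmf A) (\<lambda>y. \<beta> * (snd (S j f) \<bullet> v)
      - (1 - \<beta>) * ((fst (S j f) - x) \<bullet> v))"
        by (rule lin2[OF finrow])
      also have "\<dots> = (\<beta> + (1 - \<beta>) * M) * (snd (S j f) \<bullet> v)
         + ((1 - \<beta>) * c - (1 - \<beta>)) * ((fst (S j f) - x) \<bullet> v)"
        unfolding rowE by (simp add: algebra_simps)
      finally show "measure_pmf.expectation (row_pmf A)
                  (\<lambda>y. \<beta> * (snd (S j f) \<bullet> v) + (1 - \<beta>) * ((H1 (S j f) y - x) \<bullet> v)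
      - (1 - \<beta>) * ((fst (S j f) - x) \<bullet> v)) = (\<beta> + (1 - \<beta>) * M) * (snd (S j f) \<bullet> v)
         + ((1 - \<beta>) * c - (1 - \<beta>)) * ((fst (S j f) - x) \<bullet> v)" .
    qed
    also have "\<dots> = (\<beta> + (1 - \<beta>) * M) * q j + ((1 - \<beta>) * c - (1 - \<beta>)) * p j"
      unfolding p_def q_def by (rule lin2[OF finP])
    finally show ?thesis using pS[of j] by (simp add: algebra_simps)
  qed
  have b1: "1 - \<beta> \<noteq> 0" using assms(4) by simp
  define W where "W = (\<lambda>j. q j / (1 - \<beta>)^2 - p j / (1 - \<beta>))"
  have zW: "\<zeta> * W j = M * q j - M * (1 - \<beta>) * p j" for j
  proof -
    have a: "(1-\<beta>)^2 * (q j / (1-\<beta>)^2) = q j" using b1 by simp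
    have b: "(1-\<beta>)^2 * (p j / (1-\<beta>)) = (1-\<beta>) * p j" using b1 by (simp add: power2_eq_square)
    have "\<zeta> * W j = M * ((1-\<beta>)^2 * (q j / (1-\<beta>)^2)) - M * ((1-\<beta>)^2 * (p j / (1-\<beta>)))"
      by (simp add: \<zeta>_def W_def right_diff_distrib mult.assoc)
    then show ?thesis unfolding a b by simp
  qed
  have ind: "vec2 (p j) (W j) = E0 *\<^sub>R (matpow2 T j *v u)" for j
  proof (induction j)
    case 0
    show ?case using b1 by (simp add: matpow2_0 u_def W_def p0 q0 vec_eq_iff forall_2)
  next
    case (Suc j)
    have e1: "p (Suc j) = r * p j + \<zeta> * W j"
      by (simp add: pS r_def zW c_def algebra_simps)
    have e2: "W (Suc j) = - p j + \<beta> * W j"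
    proof -
      have nz: "(1 - \<beta>)^2 \<noteq> 0" using b1 by simp
      have "q (Suc j) / (1-\<beta>)^2 = \<beta> * (q j / (1-\<beta>)^2) + (p (Suc j) - p j) / (1 - \<beta>)"
        unfolding qS using b1 nz by (simp add: divide_simps power2_eq_square) (simp add: algebra_simps)
      then show ?thesis unfolding W_def using b1 by (simp add: divide_simps) (simp add: algebra_simps)
    qed
    have "E0 *\<^sub>R (matpow2 T (Suc j) *v u) = T *v (E0 *\<^sub>R (matpow2 T j *v u))"
      by (simp add: matpow2_Suc matrix_vector_mult_scaleR)
    also have "\<dots> = T *v vec2 (p j) (W j)" using Suc.IH by simp
    also have "\<dots> = vec2 (p (Suc j)) (W (Suc j))"
      by (simp add: T_def mat22_mv e1 e2)
    finally show ?case by simp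
  qed
  show ?thesis
  proof
    fix k
    have "measure_pmf.expectation (Pi_pmf {..k} undefined (\<lambda>_. row_pmf A))
            (\<lambda>\<omega>. (fst (kgsm A (A *v x) M \<beta> x0 \<omega> (Suc k)) - x) \<bullet> v) = p (Suc k)"
      by (simp add: p_def P_def S_def lessThan_Suc_atMost)
    also have "\<dots> = r * p k + \<zeta> * W k"
      by (simp add: pS r_def zW c_def algebra_simps)
    also have "\<dots> = vec2 r \<zeta> \<bullet> vec2 (p k) (W k)" by (simp add: vec2_inner)
    also have "\<dots> = vec2 r \<zeta> \<bullet> (matpow2 T k *v u) * E0" by (simp add: ind)
    finally show "measure_pmf.expectation (Pi_pmf {..k} undefined (\<lambda>_. row_pmf A))
            (\<lambda>\<omega>. (fst (kgsm A (A *v x) M \<beta> x0 \<omega> (Suc k)) - x) \<bullet> v)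
        = vec2 (1 - \<sigma>^2 / (frob_norm A)^2 + M * (1 - \<beta>)) (M * (1 - \<beta>)^2) \<bullet>
          (matpow2 (mat22 (1 - \<sigma>^2 / (frob_norm A)^2 + M * (1 - \<beta>)) (M * (1 - \<beta>)^2) (-1) \<beta>) k
            *v vec2 1 (-1 / (1 - \<beta>))) * ((x0 - x) \<bullet> v)"
      by (simp add: r_def \<zeta>_def T_def u_def E0_def)
  qed
qed

end
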